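(* Let $\mathbb{H}$ be an $r$-uniform simple hypergraph of diameter two with maximum degree $\Delta$. Then $\lambda(\mathbb{H})\le\big((r-1)\Delta\big)^2$.
   Context: Distances in a hypergraph $\mathbb{H}=(V,E)$ are taken in its $2$-section, the graph on $V$ in which distinct vertices are adjacent iff they lie in a common edge; the diameter is the maximum distance between two vertices. The degree of a vertex is the number of edges containing it. An $L(2,1)$-colouring of $\mathbb{H}$ is a map $f:V\to\mathbb{Z}_{\ge 0}$ such that $|f(u)-f(v)|\ge 2$ whenever $u\ne v$ lie in a common edge, and $|f(u)-f(v)|\ge 1$ whenever there are edges $e_1\ni v$, $e_2\ni u$ with $(e_1\cap e_2)\setminus\{u,v\}\ne\emptyset$. Its span is $\max f-\min f$, and $\lambda(\mathbb{H})$ is the minimum span. *)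

theory Defs
  imports Main
begin

text \<open>A hypergraph is a vertex set V with an edge set E of subsets of V.
  Simple: finite, edges are subsets of V, no loops (edges have at least 2 vertices);
  multiple edges are excluded since E is a set.\<close>
definition simple_hypergraph :: "'a set \<Rightarrow> 'a set set \<Rightarrow> bool" where
  "simple_hypergraph V E \<longleftrightarrow> finite V \<and> (\<forall>e\<in>E. e \<subseteq> V \<and> card e \<ge> 2)"

definition uniform :: "nat \<Rightarrow> 'a set set \<Rightarrow> bool" where
  "uniform r E \<longleftrightarrow> (\<forall>e\<in>E. card e = r)"

definition hadj :: "'a set set \<Rightarrow> 'a \<Rightarrow> 'a \<Rightarrow> bool" where
  "hadj E u v \<longleftrightarrow> u \<noteq> v \<and> (\<exists>e\<in>E. u \<in> e \<and> v \<in> e)"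

fun walk_le :: "'a set set \<Rightarrow> nat \<Rightarrow> 'a \<Rightarrow> 'a \<Rightarrow> bool" where
  "walk_le E 0 u v \<longleftrightarrow> u = v"
| "walk_le E (Suc n) u v \<longleftrightarrow> walk_le E n u v \<or> (\<exists>w. walk_le E n u w \<and> hadj E w v)"

definition diameter_two :: "'a set \<Rightarrow> 'a set set \<Rightarrow> bool" where
  "diameter_two V E \<longleftrightarrow> (\<forall>u\<in>V. \<forall>v\<in>V. walk_le E 2 u v)
     \<and> (\<exists>u\<in>V. \<exists>v\<in>V. \<not> walk_le E 1 u v)"

definition degree :: "'a set set \<Rightarrow> 'a \<Rightarrow> nat" where
  "degree E v = card {e\<in>E. v \<in> e}"

definition max_degree :: "'a set \<Rightarrow> 'a set set \<Rightarrow> nat" where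
  "max_degree V E = Max (degree E ` V)"

definition L21_colouring :: "'a set \<Rightarrow> 'a set set \<Rightarrow> ('a \<Rightarrow> nat) \<Rightarrow> bool" where
  "L21_colouring V E f \<longleftrightarrow>
     (\<forall>u\<in>V. \<forall>v\<in>V. u \<noteq> v \<and> (\<exists>e\<in>E. u \<in> e \<and> v \<in> e) \<longrightarrow>
         \<bar>int (f u) - int (f v)\<bar> \<ge> 2)
   \<and> (\<forall>u\<in>V. \<forall>v\<in>V. u \<noteq> v \<and> (\<exists>e1\<in>E. \<exists>e2\<in>E. v \<in> e1 \<and> u \<in> e2 \<and> (e1 \<inter> e2) - {u, v} \<noteq> {}) \<longrightarrow>
         \<bar>int (f u) - int (f v)\<bar> \<ge> 1)"

definition span :: "'a set \<Rightarrow> ('a \<Rightarrow> nat) \<Rightarrow> nat" where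
  "span V f = Max (f ` V) - Min (f ` V)"

definition lambda21 :: "'a set \<Rightarrow> 'a set set \<Rightarrow> nat" where
  "lambda21 V E = (LEAST s. \<exists>f. L21_colouring V E f \<and> span V f = s)"

end

theory Submission
  imports Defs
begin


fun br :: "('a \<Rightarrow> 'a \<Rightarrow> bool) \<Rightarrow> 'a list \<Rightarrow> nat" where
  "br adj [] = 0"
| "br adj [x] = 0"
| "br adj (x # y # ys) = (if adj x y then 1 else 0) + br adj (y # ys)"

lemma br_Cons: "br adj (x # xs) = (if xs \<noteq> [] \<and> adj x (hd xs) then 1 else 0) + br adj xs"
  by (cases xs) auto

lemma br_app: "br adj (xs @ ys) = br adj xs + br adj ys +
   (if xs \<noteq> [] \<and> ys \<noteq> [] \<and> adj (last xs) (hd ys) then 1 else 0)"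
proof (induction xs)
  case Nil then show ?case by simp
next
  case (Cons x xs)
  show ?case
  proof (cases xs)
    case Nil then show ?thesis by (cases ys) auto
  next
    case (Cons z zs)
    then show ?thesis using Cons.IH by (simp add: br_Cons)
  qed
qed

lemma br_rev:
  assumes sym: "\<And>u v. adj u v \<longleftrightarrow> adj v u"
  shows "br adj (rev xs) = br adj xs"
proof (induction xs)
  case Nil then show ?case by simp
next
  case (Cons x xs)
  have "br adj (rev (x#xs)) = br adj (rev xs) + (if xs \<noteq> [] \<and> adj (hd xs) x then 1 else 0)"
    by (simp add: br_app last_rev)
  then show ?case using Cons.IH sym by (simp add: br_Cons)
qed

lemma br_le: "br adj xs \<le> length xs - 1"
  by (induction adj xs rule: br.induct) auto

lemma br_take_Suc:
  assumes "Suc k < length xs"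
  shows "br adj (take (Suc (Suc k)) xs) = br adj (take (Suc k) xs) +
     (if adj (xs ! k) (xs ! Suc k) then 1 else 0)"
proof -
  have "take (Suc (Suc k)) xs = take (Suc k) xs @ [xs ! Suc k]"
    using assms by (simp add: take_Suc_conv_app_nth)
  moreover have "last (take (Suc k) xs) = xs ! k"
    using assms by (subst last_conv_nth) (auto simp: min_def)
  moreover have "take (Suc k) xs \<noteq> []" using assms by auto
  ultimately show ?thesis by (simp add: br_app)
qed

lemma rotA:
  assumes sym: "\<And>u v. adj u v \<longleftrightarrow> adj v u"
    and ij: "i + 2 \<le> j" "j < length xs"
    and br1: "adj (xs!i) (xs!Suc i)" and k1: "\<not> adj (xs!i) (xs!j)"
    and k2: "Suc j < length xs \<longrightarrow> \<not> adj (xs ! Suc i) (xs ! Suc j)"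
  shows "\<exists>ys. distinct ys = distinct xs \<and> set ys = set xs \<and> br adj ys < br adj xs"
proof -
  define X where "X = take (Suc i) xs"
  define Y where "Y = take (j - i) (drop (Suc i) xs)"
  define Z where "Z = drop (Suc j) xs"
  have dY: "drop (j - i) (drop (Suc i) xs) = Z" using ij by (simp add: Z_def)
  have xs: "xs = X @ Y @ Z"
    using dY X_def Y_def by (metis append_take_drop_id)
  have XN: "X \<noteq> []" using ij X_def by auto
  have YN: "Y \<noteq> []" using ij Y_def by auto
  have lX: "last X = xs ! i" unfolding X_def using ij
    by (subst last_conv_nth) (auto simp: min_def)
  have hY: "hd Y = xs ! Suc i" unfolding Y_def using ij
    by (simp add: hd_conv_nth hd_drop_conv_nth)
  have lenY: "length Y = j - i" using ij Y_def by auto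
  have lY: "last Y = xs ! j" using ij YN lenY
    by (subst last_conv_nth) (auto simp: Y_def)
  have hZ: "Z \<noteq> [] \<Longrightarrow> hd Z = xs ! Suc j" unfolding Z_def
    by (simp add: hd_drop_conv_nth)
  have ZN: "Z \<noteq> [] \<longleftrightarrow> Suc j < length xs" unfolding Z_def by auto
  define ys where "ys = X @ rev Y @ Z"
  have "br adj xs = br adj X + br adj Y + br adj Z + 1 +
      (if Z \<noteq> [] \<and> adj (last Y) (hd Z) then 1 else 0)"
    using XN YN br1 lX hY by (subst xs) (simp add: br_app)
  moreover have "br adj ys = br adj X + br adj Y + br adj Z"
    using XN YN k1 k2 lX lY hY hZ ZN sym
    by (simp add: ys_def br_app br_rev[of adj, OF sym] hd_rev last_rev)
  ultimately have "br adj ys < br adj xs" by simp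
  moreover have "distinct ys = distinct (X@Y@Z)" "set ys = set (X@Y@Z)"
    by (auto simp: ys_def)
  then have "distinct ys = distinct xs" "set ys = set xs" using xs by simp_all
  ultimately show ?thesis by blast
qed

definition minord :: "('a \<Rightarrow> 'a \<Rightarrow> bool) \<Rightarrow> 'a set \<Rightarrow> 'a list \<Rightarrow> bool" where
  "minord adj V xs \<longleftrightarrow> distinct xs \<and> set xs = V \<and>
     (\<forall>ys. distinct ys \<and> set ys = V \<longrightarrow> br adj xs \<le> br adj ys)"

lemma killA:
  assumes sym: "\<And>u v. adj u v \<longleftrightarrow> adj v u"
    and m: "minord adj V xs" and ij: "i + 2 \<le> j" "j < length xs"
    and br1: "adj (xs!i) (xs!Suc i)"
  shows "adj (xs!i) (xs!j) \<or> (Suc j < length xs \<and> adj (xs ! Suc i) (xs ! Suc j))"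
proof (rule ccontr)
  assume "\<not> ?thesis"
  then obtain ys where "distinct ys = distinct xs" "set ys = set xs" "br adj ys < br adj xs"
    using rotA[OF sym ij br1] by blast
  then show False using m unfolding minord_def by fastforce
qed

lemma minord_rev:
  assumes sym: "\<And>u v. adj u v \<longleftrightarrow> adj v u" and m: "minord adj V xs"
  shows "minord adj V (rev xs)"
  using m br_rev[of adj, OF sym] unfolding minord_def by auto

lemma killB:
  assumes sym: "\<And>u v. adj u v \<longleftrightarrow> adj v u"
    and m: "minord adj V xs" and ij: "j < i" "Suc i < length xs"
    and br1: "adj (xs!i) (xs!Suc i)"
  shows "adj (xs!Suc i) (xs!j) \<or> (0 < j \<and> adj (xs ! i) (xs ! (j - 1)))"
proof -
  define n where "n = length xs"
  define i' where "i' = n - 2 - i"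
  define j' where "j' = n - 1 - j"
  have m': "minord adj V (rev xs)" by (rule minord_rev[OF sym m])
  have e1: "rev xs ! i' = xs ! Suc i" using ij by (simp add: rev_nth i'_def n_def Suc_diff_Suc)
  have e2: "rev xs ! Suc i' = xs ! i" using ij by (simp add: rev_nth i'_def n_def Suc_diff_Suc)
  have e3: "rev xs ! j' = xs ! j" using ij by (simp add: rev_nth j'_def n_def Suc_diff_Suc)
  have e4: "Suc j' < length (rev xs) \<Longrightarrow> rev xs ! Suc j' = xs ! (j - 1)"
  proof -
    assume a: "Suc j' < length (rev xs)"
    have "length xs - Suc (Suc j') = j - 1" using a ij by (simp add: j'_def n_def)
    then show ?thesis using a by (simp add: rev_nth)
  qed
  have e5: "Suc j' < length (rev xs) \<longleftrightarrow> 0 < j" using ij by (auto simp: j'_def n_def)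
  have "i' + 2 \<le> j'" "j' < length (rev xs)" using ij by (auto simp: i'_def j'_def n_def)
  moreover have "adj (rev xs ! i') (rev xs ! Suc i')" using e1 e2 br1 sym by simp
  ultimately have "adj (rev xs ! i') (rev xs ! j') \<or>
      (Suc j' < length (rev xs) \<and> adj (rev xs ! Suc i') (rev xs ! Suc j'))"
    using killA[OF sym m'] by blast
  then show ?thesis using e1 e2 e3 e4 e5 by auto
qed

lemma card_S_le:
  assumes "distinct xs" "set xs = V" "\<forall>v\<in>V. card {u\<in>V. adj v u} \<le> D" "a \<in> V"
  shows "card {k. k < length xs \<and> adj a (xs!k)} \<le> D"
proof -
  let ?S = "{k. k < length xs \<and> adj a (xs!k)}"
  have "inj_on (nth xs) ?S" using assms(1) by (auto simp: inj_on_def nth_eq_iff_index_eq)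
  then have "card ?S = card (nth xs ` ?S)" by (simp add: card_image)
  also have "\<dots> \<le> card {u\<in>V. adj a u}"
    by (rule card_mono) (use assms(2) in auto)
  also have "\<dots> \<le> D" using assms by auto
  finally show ?thesis .
qed

lemma count_bound:
  assumes sym: "\<And>u v. adj u v \<longleftrightarrow> adj v u" and irr: "\<And>u. \<not> adj u u"
    and m: "minord adj V xs" and i: "Suc i < length xs"
    and br1: "adj (xs!i) (xs!Suc i)"
    and deg: "\<forall>v\<in>V. card {u\<in>V. adj v u} \<le> D"
  shows "length xs \<le> 2 * D"
proof -
  define n where "n = length xs"
  define a where "a = xs ! i"
  define c where "c = xs ! Suc i"
  define Sa where "Sa = {k. k < n \<and> adj a (xs!k)}"
  define Sc where "Sc = {k. k < n \<and> adj c (xs!k)}"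
  have dist: "distinct xs" and sV: "set xs = V" using m by (auto simp: minord_def)
  have aV: "a \<in> V" "c \<in> V" using i sV by (auto simp: a_def c_def)
  have cSa: "card Sa \<le> D" unfolding Sa_def n_def by (rule card_S_le[OF dist sV deg aV(1)])
  have cSc: "card Sc \<le> D" unfolding Sc_def n_def by (rule card_S_le[OF dist sV deg aV(2)])
  have fSa: "finite Sa" "finite Sc" by (auto simp: Sa_def Sc_def)
  have iSa: "Suc i \<in> Sa" using i br1 by (auto simp: Sa_def a_def c_def n_def)
  have iSc: "i \<in> Sc" using i br1 sym by (auto simp: Sc_def a_def c_def n_def)
  have cover: "{..<i} \<union> {i+2..<n} \<subseteq> (Sa \<inter> {i+2..<n}) \<union> Suc ` (Sa \<inter> {..<i}) \<union>
      (Sc \<inter> {..<i}) \<union> (\<lambda>k. k - 1) ` (Sc \<inter> {i+3..<n})"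
  proof
    fix j assume j: "j \<in> {..<i} \<union> {i+2..<n}"
    show "j \<in> (Sa \<inter> {i+2..<n}) \<union> Suc ` (Sa \<inter> {..<i}) \<union>
      (Sc \<inter> {..<i}) \<union> (\<lambda>k. k - 1) ` (Sc \<inter> {i+3..<n})"
    proof (cases "j < i")
      case True
      then have "adj c (xs!j) \<or> (0 < j \<and> adj a (xs ! (j - 1)))"
        using killB[OF sym m True i br1] by (simp add: a_def c_def)
      then show ?thesis
      proof
        assume "adj c (xs!j)" then have "j \<in> Sc \<inter> {..<i}" using True i by (auto simp: Sc_def n_def)
        then show ?thesis by blast
      next
        assume h: "0 < j \<and> adj a (xs ! (j - 1))"
        then have "j - 1 \<in> Sa \<inter> {..<i}" using True i by (auto simp: Sa_def n_def)
        moreover have "j = Suc (j - 1)" using h by simp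
        ultimately show ?thesis by blast
      qed
    next
      case False
      then have ij: "i + 2 \<le> j" "j < length xs" using j by (auto simp: n_def)
      have "adj a (xs!j) \<or> (Suc j < length xs \<and> adj c (xs ! Suc j))"
        using killA[OF sym m ij br1] by (simp add: a_def c_def)
      then show ?thesis
      proof
        assume "adj a (xs!j)" then have "j \<in> Sa \<inter> {i+2..<n}" using ij by (auto simp: Sa_def n_def)
        then show ?thesis by blast
      next
        assume h: "Suc j < length xs \<and> adj c (xs ! Suc j)"
        then have "Suc j \<in> Sc \<inter> {i+3..<n}" using ij by (auto simp: Sc_def n_def)
        moreover have "j = Suc j - 1" by simp
        ultimately show ?thesis by blast
      qed
    qed
  qed
  have "n - 2 = card ({..<i} \<union> {i+2..<n})"
  proof -
    have "card ({..<i} \<union> {i+2..<n}) = card {..<i} + card {i+2..<n}"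
      by (rule card_Un_disjoint) auto
    moreover have "card {..<i} = i" by simp
    moreover have "card {i+2..<n} = n - (i+2)" by simp
    moreover have "n - 2 = i + (n - (i+2))" using i unfolding n_def by linarith
    ultimately show ?thesis by simp
  qed
  also have "\<dots> \<le> card ((Sa \<inter> {i+2..<n}) \<union> Suc ` (Sa \<inter> {..<i}) \<union>
      (Sc \<inter> {..<i}) \<union> (\<lambda>k. k - 1) ` (Sc \<inter> {i+3..<n}))"
    by (rule card_mono[OF _ cover]) (use fSa in auto)
  also have "\<dots> \<le> card (Sa \<inter> {i+2..<n}) + card (Sa \<inter> {..<i}) +
      card (Sc \<inter> {..<i}) + card (Sc \<inter> {i+3..<n})"
  proof -
    let ?A = "Sa \<inter> {i+2..<n}" and ?B = "Suc ` (Sa \<inter> {..<i})"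
      and ?C = "Sc \<inter> {..<i}" and ?D = "(\<lambda>k. k - 1) ` (Sc \<inter> {i+3..<n})"
    have "card (?A \<union> ?B \<union> ?C \<union> ?D) \<le> card (?A \<union> ?B \<union> ?C) + card ?D" by (rule card_Un_le)
    moreover have "card (?A \<union> ?B \<union> ?C) \<le> card (?A \<union> ?B) + card ?C" by (rule card_Un_le)
    moreover have "card (?A \<union> ?B) \<le> card ?A + card ?B" by (rule card_Un_le)
    moreover have "card ?B \<le> card (Sa \<inter> {..<i})" by (rule card_image_le) (use fSa in auto)
    moreover have "card ?D \<le> card (Sc \<inter> {i+3..<n})" by (rule card_image_le) (use fSa in auto)
    ultimately show ?thesis by linarith
  qed
  finally have s1: "n - 2 \<le> card (Sa \<inter> {i+2..<n}) + card (Sa \<inter> {..<i}) +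
      card (Sc \<inter> {..<i}) + card (Sc \<inter> {i+3..<n})" .
  have "card (Sa \<inter> {i+2..<n}) + card (Sa \<inter> {..<i}) = card ((Sa \<inter> {i+2..<n}) \<union> (Sa \<inter> {..<i}))"
    by (subst card_Un_disjoint) (use fSa in auto)
  also have "\<dots> \<le> card (Sa - {Suc i})" by (rule card_mono) (use fSa in auto)
  finally have s2: "card (Sa \<inter> {i+2..<n}) + card (Sa \<inter> {..<i}) \<le> card (Sa - {Suc i})" .
  have "card (Sc \<inter> {..<i}) + card (Sc \<inter> {i+3..<n}) = card ((Sc \<inter> {..<i}) \<union> (Sc \<inter> {i+3..<n}))"
    by (subst card_Un_disjoint) (use fSa in auto)
  also have "\<dots> \<le> card (Sc - {i})" by (rule card_mono) (use fSa in auto)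
  finally have s3: "card (Sc \<inter> {..<i}) + card (Sc \<inter> {i+3..<n}) \<le> card (Sc - {i})" .
  from s1 s2 s3 have "n - 2 \<le> card (Sa - {Suc i}) + card (Sc - {i})" by linarith
  then have "n - 2 \<le> (card Sa - 1) + (card Sc - 1)" using iSa iSc fSa by simp
  moreover have "card Sa \<ge> 1" "card Sc \<ge> 1" using iSa iSc fSa
    by (auto simp: Suc_le_eq card_gt_0_iff)
  ultimately show ?thesis using cSa cSc by (simp add: n_def)
qed

lemma special4:
  assumes sym: "\<And>u v. adj u v \<longleftrightarrow> adj v u" and irr: "\<And>u. \<not> adj u u"
    and m: "minord adj V xs" and l: "length xs = 4"
    and deg: "\<forall>v\<in>V. card {u\<in>V. adj v u} \<le> 2"
  shows "br adj xs \<le> 1"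
proof -
  obtain y0 y1 y2 y3 where xs: "xs = [y0, y1, y2, y3]"
  proof -
    have "xs = [xs!0, xs!1, xs!2, xs!3]"
      by (rule nth_equalityI) (auto simp: l less_Suc_eq numeral_eq_Suc nth_Cons split: nat.splits)
    then show ?thesis using that by blast
  qed
  have dist: "distinct xs" and sV: "set xs = V" using m by (auto simp: minord_def)
  have d3: "\<not> (adj v a \<and> adj v b \<and> adj v c)"
    if "v \<in> V" "a \<in> V" "b \<in> V" "c \<in> V" "a \<noteq> b" "a \<noteq> c" "b \<noteq> c" for v a b c
  proof
    assume h: "adj v a \<and> adj v b \<and> adj v c"
    have "{a, b, c} \<subseteq> {u\<in>V. adj v u}" using h that by auto
    then have "card {a, b, c} \<le> card {u\<in>V. adj v u}"
      by (rule card_mono[rotated]) (use sV in auto)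
    also have "\<dots> \<le> 2" using deg that by auto
    finally show False using that by auto
  qed
  have V: "y0 \<in> V" "y1 \<in> V" "y2 \<in> V" "y3 \<in> V" using sV xs by auto
  have ds: "y0 \<noteq> y1" "y0 \<noteq> y2" "y0 \<noteq> y3" "y1 \<noteq> y2" "y1 \<noteq> y3" "y2 \<noteq> y3"
    using dist xs by auto
  have k0: "adj y0 y1 \<Longrightarrow> (adj y0 y2 \<or> adj y1 y3) \<and> adj y0 y3"
  proof -
    assume h: "adj y0 y1"
    have "adj (xs!0) (xs!Suc 0)" using h xs by simp
    from killA[OF sym m _ _ this, of 2] killA[OF sym m _ _ this, of 3]
    show ?thesis using xs by simp
  qed
  have k1: "adj y1 y2 \<Longrightarrow> adj y1 y3 \<and> (adj y0 y2)"
  proof -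
    assume h: "adj y1 y2"
    have "adj (xs!1) (xs!Suc 1)" using h xs by simp
    from killA[OF sym m _ _ this, of 3] killB[OF sym m _ _ this, of 0]
    show ?thesis using xs sym[of y2 y0] by simp
  qed
  have k2: "adj y2 y3 \<Longrightarrow> adj y0 y3 \<and> (adj y1 y3 \<or> adj y0 y2)"
  proof -
    assume h: "adj y2 y3"
    have "adj (xs!2) (xs!Suc 2)" using h xs by (simp add: numeral_eq_Suc)
    from killB[OF sym m _ _ this, of 0] killB[OF sym m _ _ this, of 1]
    show ?thesis using xs sym[of y3 y0] sym[of y3 y1] sym[of y2 y0] by (simp add: numeral_eq_Suc)
  qed
  have b: "br adj xs = (if adj y0 y1 then 1 else 0) + (if adj y1 y2 then 1 else 0) + (if adj y2 y3 then 1 else 0)"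
    using xs by simp
  show ?thesis
    using b k0 k1 k2 d3[OF V(1) V(2) V(3) V(4)] d3[OF V(2) V(1) V(3) V(4)]
      d3[OF V(3) V(1) V(2) V(4)] d3[OF V(4) V(1) V(2) V(3)] ds
      sym[of y1 y0] sym[of y2 y0] sym[of y3 y0] sym[of y2 y1] sym[of y3 y1] sym[of y3 y2]
    by (simp split: if_splits)
qed



lemma lab_step:
  assumes "Suc k < length xs"
  shows "Suc k + br adj (take (Suc (Suc k)) xs) = (k + br adj (take (Suc k) xs)) + 1 +
     (if adj (xs ! k) (xs ! Suc k) then 1 else 0)"
  using br_take_Suc[OF assms] by simp

lemma lab_mono:
  assumes "k \<le> l" "l < length xs"
  shows "k + br adj (take (Suc k) xs) + (l - k) \<le> l + br adj (take (Suc l) xs)"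
  using assms
proof (induction l)
  case 0 then show ?case by simp
next
  case (Suc l)
  show ?case
  proof (cases "k = Suc l")
    case True then show ?thesis by simp
  next
    case False
    then have "k \<le> l" using Suc by simp
    then have "k + br adj (take (Suc k) xs) + (l - k) \<le> l + br adj (take (Suc l) xs)"
      using Suc by simp
    moreover have "Suc l + br adj (take (Suc (Suc l)) xs) \<ge> l + br adj (take (Suc l) xs) + 1"
      using lab_step[OF Suc(3), of adj] by simp
    ultimately show ?thesis using \<open>k \<le> l\<close> by simp
  qed
qed

lemma colouring_from_list:
  assumes sg: "simple_hypergraph V E" and d: "distinct xs" and s: "set xs = V" and ne: "xs \<noteq> []"
  shows "\<exists>f. L21_colouring V E f \<and> span V f = length xs - 1 + br (hadj E) xs"
proof -
  define n where "n = length xs"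
  define lab where "lab k = k + br (hadj E) (take (Suc k) xs)" for k
  define f where "f v = lab (THE k. k < n \<and> xs ! k = v)" for v
  have fk: "f (xs ! k) = lab k" if "k < n" for k
  proof -
    have "(THE k'. k' < n \<and> xs ! k' = xs ! k) = k"
      by (rule the_equality) (use that d in \<open>auto simp: n_def nth_eq_iff_index_eq\<close>)
    then show ?thesis by (simp add: f_def)
  qed
  have mono: "lab k + (l - k) \<le> lab l" if "k \<le> l" "l < n" for k l
    using lab_mono[OF that(1), of xs "hadj E"] that by (simp add: lab_def n_def)
  have step: "lab (Suc k) = lab k + 1 + (if hadj E (xs ! k) (xs ! Suc k) then 1 else 0)"
    if "Suc k < n" for k
    using lab_step[of k xs "hadj E"] that by (simp add: lab_def n_def)
  have key: "\<bar>int (lab k) - int (lab l)\<bar> \<ge> 1 \<and>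
      (hadj E (xs!k) (xs!l) \<longrightarrow> \<bar>int (lab k) - int (lab l)\<bar> \<ge> 2)"
    if "k < l" "l < n" for k l
  proof (cases "l = Suc k")
    case True
    then show ?thesis using step[of k] that by auto
  next
    case False
    then have "lab k + 2 \<le> lab l" using mono[of k l] that by simp
    then show ?thesis by simp
  qed
  have symh: "hadj E u v \<longleftrightarrow> hadj E v u" for u v by (auto simp: hadj_def)
  have col: "L21_colouring V E f"
    unfolding L21_colouring_def
  proof (intro conjI ballI impI)
    fix u v assume uv: "u \<in> V" "v \<in> V"
    obtain k where k: "k < n" "xs ! k = u" using uv s by (auto simp: n_def in_set_conv_nth)
    obtain l where l: "l < n" "xs ! l = v" using uv s by (auto simp: n_def in_set_conv_nth)
    {
      assume neq: "u \<noteq> v"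
      then have "k \<noteq> l" using k l by auto
      then have "k < l \<or> l < k" by auto
      then have "\<bar>int (f u) - int (f v)\<bar> \<ge> 1 \<and>
          (hadj E u v \<longrightarrow> \<bar>int (f u) - int (f v)\<bar> \<ge> 2)"
      proof
        assume "k < l" then show ?thesis using key[of k l] k l fk by auto
      next
        assume "l < k" then show ?thesis using key[of l k] k l fk symh[of u v] by auto
      qed
    }
    note * = this
    show "2 \<le> \<bar>int (f u) - int (f v)\<bar>" if "u \<noteq> v \<and> (\<exists>e\<in>E. u \<in> e \<and> v \<in> e)"
      using *[of] that by (auto simp: hadj_def)
    show "1 \<le> \<bar>int (f u) - int (f v)\<bar>"
      if "u \<noteq> v \<and> (\<exists>e1\<in>E. \<exists>e2\<in>E. v \<in> e1 \<and> u \<in> e2 \<and> e1 \<inter> e2 - {u, v} \<noteq> {})"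
      using * that by auto
  qed
  have img: "f ` V = lab ` {..<n}"
  proof -
    have "nth xs ` {..<n} = V" using s by (auto simp: n_def in_set_conv_nth)
    then have "f ` V = f ` (nth xs ` {..<n})" by simp
    also have "\<dots> = lab ` {..<n}" by (auto simp: image_image fk)
    finally show ?thesis .
  qed
  have n0: "0 < n" using ne by (simp add: n_def)
  have mx: "Max (f ` V) = lab (n - 1)"
    unfolding img
  proof (rule Max_eqI)
    show "lab (n - 1) \<in> lab ` {..<n}" using n0 by simp
    fix y assume "y \<in> lab ` {..<n}"
    then obtain k where "k < n" "y = lab k" by auto
    moreover have "lab k + (n - 1 - k) \<le> lab (n - 1)" by (rule mono) (use \<open>k < n\<close> in auto)
    ultimately show "y \<le> lab (n - 1)" by linarith
  qed simp
  have mn: "Min (f ` V) = lab 0"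
    unfolding img
  proof (rule Min_eqI)
    show "lab 0 \<in> lab ` {..<n}" using n0 by simp
    fix y assume "y \<in> lab ` {..<n}"
    then obtain k where "k < n" "y = lab k" by auto
    then show "lab 0 \<le> y" using mono[of 0 k] by simp
  qed simp
  have "lab 0 = 0" using ne by (cases xs) (auto simp: lab_def)
  moreover have "lab (n - 1) = n - 1 + br (hadj E) xs" using n0 by (simp add: lab_def n_def)
  ultimately have "span V f = length xs - 1 + br (hadj E) xs"
    using mx mn by (simp add: span_def n_def)
  then show ?thesis using col by blast
qed



lemma br_pos: "0 < br adj xs \<Longrightarrow> \<exists>i. Suc i < length xs \<and> adj (xs!i) (xs!Suc i)"
proof (induction adj xs rule: br.induct)
  case (3 adj x y ys)
  show ?case
  proof (cases "adj x y")
    case True then show ?thesis by (intro exI[of _ 0]) simp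
  next
    case False
    then obtain i where "Suc i < length (y # ys)" "adj ((y#ys)!i) ((y#ys)!Suc i)"
      using 3 by auto
    then show ?thesis by (intro exI[of _ "Suc i"]) simp
  qed
qed auto

lemma deg_bound:
  assumes sg: "simple_hypergraph V E" and un: "uniform r E" and v: "v \<in> V"
  shows "card {u\<in>V. hadj E v u} \<le> (r - 1) * max_degree V E"
proof -
  have fV: "finite V" using sg by (simp add: simple_hypergraph_def)
  have EV: "\<forall>e\<in>E. e \<subseteq> V" using sg by (simp add: simple_hypergraph_def)
  have fE: "finite E" using EV fV by (meson Pow_iff finite_Pow_iff rev_finite_subset subsetI)
  let ?I = "{e\<in>E. v \<in> e}"
  have "{u\<in>V. hadj E v u} \<subseteq> (\<Union>e\<in>?I. e - {v})" by (auto simp: hadj_def)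
  then have "card {u\<in>V. hadj E v u} \<le> card (\<Union>e\<in>?I. e - {v})"
    by (rule card_mono[rotated]) (use fE EV fV in \<open>auto intro: finite_subset\<close>)
  also have "\<dots> \<le> (\<Sum>e\<in>?I. card (e - {v}))" by (rule card_UN_le) (use fE in auto)
  also have "\<dots> = (\<Sum>e\<in>?I. r - 1)"
  proof (rule sum.cong)
    fix e assume "e \<in> ?I"
    then have "card e = r" "finite e" "v \<in> e" using un EV fV
      by (auto simp: uniform_def intro: finite_subset)
    then show "card (e - {v}) = r - 1" by simp
  qed simp
  also have "\<dots> = degree E v * (r - 1)" by (simp add: degree_def)
  also have "\<dots> \<le> max_degree V E * (r - 1)"
    using fV v by (auto simp: max_degree_def)
  finally show ?thesis by (simp add: mult.commute)
qed

lemma walk2: "walk_le E 2 u v \<longleftrightarrow> u = v \<or> hadj E u v \<or> (\<exists>w. (u = w \<or> hadj E u w) \<and> hadj E w v)"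
  by (auto simp: numeral_2_eq_2)

lemma walk1: "walk_le E 1 u v \<longleftrightarrow> u = v \<or> hadj E u v"
  by auto

lemma moore:
  assumes fV: "finite V" and EV: "\<forall>e\<in>E. e \<subseteq> V"
    and deg: "\<forall>x\<in>V. card {u\<in>V. hadj E x u} \<le> D"
    and v: "v \<in> V" and diam: "\<forall>u\<in>V. walk_le E 2 v u"
  shows "card V \<le> D * D + 1"
proof -
  define N where "N x = {u\<in>V. hadj E x u}" for x
  have inV: "hadj E x y \<Longrightarrow> y \<in> V \<and> x \<in> V" for x y using EV by (auto simp: hadj_def)
  have "V \<subseteq> insert v (N v \<union> (\<Union>w\<in>N v. N w - {v}))"
  proof
    fix u assume u: "u \<in> V"
    then have "v = u \<or> hadj E v u \<or> (\<exists>w. (v = w \<or> hadj E v w) \<and> hadj E w u)"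
      using diam walk2 by metis
    then show "u \<in> insert v (N v \<union> (\<Union>w\<in>N v. N w - {v}))"
      using u inV by (auto simp: N_def)
  qed
  then have "card V \<le> card (insert v (N v \<union> (\<Union>w\<in>N v. N w - {v})))"
    by (rule card_mono[rotated]) (auto simp: N_def fV)
  also have "\<dots> \<le> Suc (card (N v \<union> (\<Union>w\<in>N v. N w - {v})))" by (rule card_insert_le_m1) auto
  also have "card (N v \<union> (\<Union>w\<in>N v. N w - {v})) \<le> card (N v) + card (\<Union>w\<in>N v. N w - {v})"
    by (rule card_Un_le)
  also have "card (\<Union>w\<in>N v. N w - {v}) \<le> (\<Sum>w\<in>N v. card (N w - {v}))"
    by (rule card_UN_le) (auto simp: N_def fV)
  also have "\<dots> \<le> (\<Sum>w\<in>N v. D - 1)"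
  proof (rule sum_mono)
    fix w assume w: "w \<in> N v"
    then have "v \<in> N w" "w \<in> V" using v inV by (auto simp: N_def hadj_def)
    then have "card (N w - {v}) = card (N w) - 1" by (simp add: N_def fV)
    also have "\<dots> \<le> D - 1" using deg \<open>w \<in> V\<close> by (simp add: N_def diff_le_mono)
    finally show "card (N w - {v}) \<le> D - 1" .
  qed
  also have "\<dots> = card (N v) * (D - 1)" by simp
  finally have "card V \<le> Suc (card (N v) + card (N v) * (D - 1))" by simp
  moreover have "card (N v) \<le> D" using deg v by (simp add: N_def)
  ultimately have "card V \<le> Suc (D + D * (D - 1))"
    by (meson Suc_le_mono add_le_mono le_trans mult_le_mono1)
  also have "D + D * (D - 1) = D * D" by (cases D) auto
  finally show ?thesis by simp
qed

theorem mainTheorem9: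
  fixes V :: "'a set" and E :: "'a set set" and r :: nat
  assumes "simple_hypergraph V E"
    and "uniform r E"
    and "diameter_two V E"
  shows "lambda21 V E \<le> ((r - 1) * max_degree V E) ^ 2"
proof -
  define D where "D = (r - 1) * max_degree V E"
  let ?adj = "hadj E"
  have fV: "finite V" and EV: "\<forall>e\<in>E. e \<subseteq> V" using assms(1) by (auto simp: simple_hypergraph_def)
  have deg: "\<forall>v\<in>V. card {u\<in>V. hadj E v u} \<le> D"
    using deg_bound[OF assms(1,2)] by (simp add: D_def)
  have sym: "\<And>u v. ?adj u v \<longleftrightarrow> ?adj v u" by (auto simp: hadj_def)
  have irr: "\<And>u. \<not> ?adj u u" by (auto simp: hadj_def)
  have inV: "hadj E x y \<Longrightarrow> y \<in> V \<and> x \<in> V" for x y using EV by (auto simp: hadj_def)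
  obtain u v where uv: "u \<in> V" "v \<in> V" "\<not> walk_le E 1 u v" and all2: "\<forall>x\<in>V. \<forall>y\<in>V. walk_le E 2 x y"
    using assms(3) by (auto simp: diameter_two_def)
  have nuv: "u \<noteq> v" "\<not> hadj E u v" using uv(3) walk1 by metis+
  obtain w where w: "hadj E u w" "hadj E w v"
    using all2 uv nuv walk2 by metis
  have wV: "w \<in> V" using w inV by blast
  have "{u, v} \<subseteq> {x\<in>V. hadj E w x}" using w uv sym by auto
  then have "card {u, v} \<le> card {x\<in>V. hadj E w x}" by (rule card_mono[rotated]) (simp add: fV)
  then have D2: "2 \<le> D" using deg wV nuv by fastforce
  have moore: "card V \<le> D * D + 1" using moore[OF fV EV deg uv(1)] all2 uv(1) by blast
  have ex: "\<exists>xs. distinct xs \<and> set xs = V" using fV finite_distinct_list by blast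
  then obtain xs where xs: "distinct xs \<and> set xs = V"
    and xmin: "\<forall>ys. distinct ys \<and> set ys = V \<longrightarrow> br ?adj xs \<le> br ?adj ys"
    using ex_has_least_nat[of "\<lambda>xs. distinct xs \<and> set xs = V" _ "br ?adj"] by blast
  have m: "minord ?adj V xs" using xs xmin by (simp add: minord_def)
  define n where "n = length xs"
  define b where "b = br ?adj xs"
  have nV: "n = card V" using xs distinct_card[of xs] by (simp add: n_def)
  have ne: "xs \<noteq> []" using xs uv by auto
  obtain f where "L21_colouring V E f" "span V f = n - 1 + b"
    using colouring_from_list[OF assms(1)] xs ne by (auto simp: n_def b_def)
  then have lam: "lambda21 V E \<le> n - 1 + b" unfolding lambda21_def by (metis (mono_tags) Least_le)
  obtain rest where rest: "distinct rest" "set rest = V - {u, v}"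
    using fV finite_distinct_list[of "V - {u,v}"] by auto
  have "distinct (u # v # rest) \<and> set (u # v # rest) = V" using rest nuv uv by auto
  then have "br ?adj xs \<le> br ?adj (u # v # rest)"
    using xmin by blast
  also have "\<dots> = br ?adj (v # rest)" using nuv by simp
  also have "\<dots> \<le> length rest" using br_le[of ?adj "v # rest"] by simp
  also have "length rest = n - 2"
  proof -
    have "length rest = card (V - {u, v})" using rest distinct_card[of rest] by simp
    also have "\<dots> = card V - 2" using uv nuv fV by (simp add: card_Diff_subset)
    finally show ?thesis by (simp add: nV)
  qed
  finally have bn: "b \<le> n - 2" by (simp add: b_def)
  have n3: "3 \<le> n"
  proof -
    have "w \<noteq> u" "w \<noteq> v" using w irr by auto
    then have "card {u, v, w} = 3" using nuv by auto
    moreover have "card {u, v, w} \<le> card V" by (rule card_mono) (use fV uv wV in auto)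
    ultimately show ?thesis using nV by simp
  qed
  have "n - 1 + b \<le> D * D"
  proof (cases "b = 0")
    case True then show ?thesis using moore nV by simp
  next
    case False
    then obtain i where i: "Suc i < length xs" "?adj (xs!i) (xs!Suc i)"
      using br_pos[of ?adj xs] by (auto simp: b_def)
    have n2D: "n \<le> 2 * D" using count_bound[OF sym irr m i deg] by (simp add: n_def)
    show ?thesis
    proof (cases "D = 2")
      case True
      show ?thesis
      proof (cases "n = 4")
        case True
        have "b \<le> 1" using special4[OF sym irr m] True \<open>D = 2\<close> deg by (simp add: n_def b_def)
        then show ?thesis using True \<open>D = 2\<close> by simp
      next
        case False
        then show ?thesis using n2D n3 bn \<open>D = 2\<close> by simp
      qed
    next
      case False
      then have "3 \<le> D" using D2 by simp
      have e1: "D * D = (D - 3) * D + 3 * D" using \<open>3 \<le> D\<close> by (simp add: algebra_simps diff_mult_distrib)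
      have e2: "D - 3 \<le> (D - 3) * D" using \<open>3 \<le> D\<close> by simp
      show ?thesis using n2D bn n3 e1 e2 \<open>3 \<le> D\<close> by linarith
    qed
  qed
  then show ?thesis using lam by (simp add: D_def power2_eq_square)
qed

end
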